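(* For the Chern connection $\nabla_E$ of a finitely generated projective holomorphic left module $E$ with non-degenerate hermitian metric (as in the context), the components of its curvature $R_E=({\rm d}\otimes\mathrm{id}-\mathrm{id}\wedge\nabla_E)\nabla_E:E\to\Omega^2\otimes_AE$ in $\Omega^{0,2}\otimes_AE$ and in $\Omega^{2,0}\otimes_AE$ vanish.
   Context: $A$ is a $*$-algebra with $*$-calculus and integrable almost complex structure ($\Omega^n=\oplus_{p+q=n}\Omega^{p,q}$, ${\rm d}=\partial+\overline\partial$, $\partial^2=\overline\partial^2=0$, $\wedge$ respecting bidegree, $*$ exchanging $\Omega^{1,0},\Omega^{0,1}$). $E$ is a left $A$-module, finitely generated projective, with holomorphic structure $\overline\partial_E:E\to\Omega^{0,1}\otimes_AE$ ($\overline\partial_E(a.e)=\overline\partial a\otimes e+a.\overline\partial_Ee$, and $(\overline\partial\otimes\mathrm{id}-\mathrm{id}\wedge\overline\partial_E)\overline\partial_E=0$), and $\langle,\rangle:E\otimes_A\overline E\to A$ is a non-degenerate hermitian inner product (bimodule map with $\langle e,\overline f\rangle^*=\langle f,\overline e\rangle$, induced by a bimodule isomorphism $\overline E\to{}_A{\rm Hom}(E,A)$). The Chern connection is the unique left connection $\nabla_E:E\to\Omega^1\otimes_AE$ that preserves the metric (${\rm d}\langle e,\overline f\rangle=(\mathrm{id}\otimes\langle,\rangle)(\nabla_Ee\otimes\overline f)+(\langle,\rangle\otimes\mathrm{id})(e\otimes\tilde\nabla\overline f)$, $\tilde\nabla(\overline f)=\overline g\otimes\kappa^*$ when $\nabla_Ef=\kappa\otimes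 g$) and satisfies $(\pi^{0,1}\otimes\mathrm{id})\nabla_E=\overline\partial_E$. *)

theory Defs
  imports Complex_Main "HOL-Library.Poly_Mapping"
begin

section \<open>Formal sums and tensor products over A\<close>

definition zscale :: "int \<Rightarrow> 'g::ab_group_add \<Rightarrow> 'g" where
  "zscale n g = (if 0 \<le> n then (\<Sum>i<nat n. g) else - (\<Sum>i<nat (- n). g))"

definition lin :: "('k \<Rightarrow> 'g::ab_group_add) \<Rightarrow> ('k \<Rightarrow>\<^sub>0 int) \<Rightarrow> 'g" where
  "lin f x = (\<Sum>k\<in>Poly_Mapping.keys x. zscale (Poly_Mapping.lookup x k) (f k))"

text \<open>The pure tensor w (x) e, as a generator of the free abelian group on W x E.\<close>
definition tn :: "'w \<Rightarrow> 'e \<Rightarrow> ('w \<times> 'e \<Rightarrow>\<^sub>0 int)" where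
  "tn w e = Poly_Mapping.single (w, e) 1"

text \<open>The subgroup of relations defining the tensor product W (x)_A E of a right
  A-module W (right action ract) and a left A-module E (left action act).
  W (x)_A E is the free abelian group on W x E modulo this subgroup.\<close>
inductive_set tens_null ::
  "('w::ab_group_add \<Rightarrow> 'a \<Rightarrow> 'w) \<Rightarrow> ('a \<Rightarrow> 'e::ab_group_add \<Rightarrow> 'e) \<Rightarrow> ('w \<times> 'e \<Rightarrow>\<^sub>0 int) set"
  for ract act where
  zero: "0 \<in> tens_null ract act"
| add: "x \<in> tens_null ract act \<Longrightarrow> y \<in> tens_null ract act \<Longrightarrow> x + y \<in> tens_null ract act"
| neg: "x \<in> tens_null ract act \<Longrightarrow> - x \<in> tens_null ract act"
| addl: "tn (w + w') e - tn w e - tn w' e \<in> tens_null ract act"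
| addr: "tn w (e + e') - tn w e - tn w e' \<in> tens_null ract act"
| bal: "tn (ract w a) e - tn w (act a e) \<in> tens_null ract act"

text \<open>Equality of the represented elements of W (x)_A E.\<close>
definition teq ::
  "('w::ab_group_add \<Rightarrow> 'a \<Rightarrow> 'w) \<Rightarrow> ('a \<Rightarrow> 'e::ab_group_add \<Rightarrow> 'e)
    \<Rightarrow> ('w \<times> 'e \<Rightarrow>\<^sub>0 int) \<Rightarrow> ('w \<times> 'e \<Rightarrow>\<^sub>0 int) \<Rightarrow> bool" where
  "teq ract act x y \<longleftrightarrow> x - y \<in> tens_null ract act"

text \<open>f (x) id on representatives.\<close>
definition tmap :: "('w \<Rightarrow> 'v) \<Rightarrow> ('w \<times> 'e \<Rightarrow>\<^sub>0 int) \<Rightarrow> ('v \<times> 'e \<Rightarrow>\<^sub>0 int)" where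
  "tmap f x = lin (\<lambda>(w, e). tn (f w) e) x"

section \<open>Star differential calculus (degrees 0,1,2) with almost complex structure\<close>

record ('a, 'w1, 'w2) calc =
  starA :: "'a \<Rightarrow> 'a"
  cpx :: "complex \<Rightarrow> 'a"        \<comment> \<open>the scalars C inside A\<close>
  lact1 :: "'a \<Rightarrow> 'w1 \<Rightarrow> 'w1"
  ract1 :: "'w1 \<Rightarrow> 'a \<Rightarrow> 'w1"
  lact2 :: "'a \<Rightarrow> 'w2 \<Rightarrow> 'w2"
  ract2 :: "'w2 \<Rightarrow> 'a \<Rightarrow> 'w2"
  d0 :: "'a \<Rightarrow> 'w1"
  d1 :: "'w1 \<Rightarrow> 'w2"
  wedge :: "'w1 \<Rightarrow> 'w1 \<Rightarrow> 'w2"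
  star1 :: "'w1 \<Rightarrow> 'w1"
  star2 :: "'w2 \<Rightarrow> 'w2"
  p10 :: "'w1 \<Rightarrow> 'w1"
  p01 :: "'w1 \<Rightarrow> 'w1"
  p20 :: "'w2 \<Rightarrow> 'w2"
  p11 :: "'w2 \<Rightarrow> 'w2"
  p02 :: "'w2 \<Rightarrow> 'w2"

definition bimod :: "('a::ring_1 \<Rightarrow> 'w::ab_group_add \<Rightarrow> 'w) \<Rightarrow> ('w \<Rightarrow> 'a \<Rightarrow> 'w) \<Rightarrow> bool" where
  "bimod l r \<longleftrightarrow>
     (\<forall>w. l 1 w = w) \<and> (\<forall>a b w. l (a * b) w = l a (l b w)) \<and>
     (\<forall>a b w. l (a + b) w = l a w + l b w) \<and> (\<forall>a w w'. l a (w + w') = l a w + l a w') \<and>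
     (\<forall>w. r w 1 = w) \<and> (\<forall>a b w. r w (a * b) = r (r w a) b) \<and>
     (\<forall>a b w. r w (a + b) = r w a + r w b) \<and> (\<forall>a w w'. r (w + w') a = r w a + r w' a) \<and>
     (\<forall>a b w. l a (r w b) = r (l a w) b)"

definition bimod_map ::
  "('a \<Rightarrow> 'w::ab_group_add \<Rightarrow> 'w) \<Rightarrow> ('w \<Rightarrow> 'a \<Rightarrow> 'w) \<Rightarrow> ('w \<Rightarrow> 'w) \<Rightarrow> bool" where
  "bimod_map l r p \<longleftrightarrow> (\<forall>w w'. p (w + w') = p w + p w') \<and>
     (\<forall>a w. p (l a w) = l a (p w)) \<and> (\<forall>a w. p (r w a) = r (p w) a)"

text \<open>A *-algebra over C with a *-differential calculus, truncated at degree 2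
  (only degrees <= 2 enter the statement), generated in the usual sense by A and dA.\<close>
definition star_calculus :: "('a::ring_1, 'w1::ab_group_add, 'w2::ab_group_add) calc \<Rightarrow> bool" where
  "star_calculus C \<longleftrightarrow>
     \<comment> \<open>C is a central unital subring of A; A is a *-algebra over C\<close>
     (\<forall>c c'. cpx C (c + c') = cpx C c + cpx C c') \<and> (\<forall>c c'. cpx C (c * c') = cpx C c * cpx C c') \<and>
     cpx C 1 = 1 \<and> (\<forall>c a. cpx C c * a = a * cpx C c) \<and>
     (\<forall>a b. starA C (a + b) = starA C a + starA C b) \<and> (\<forall>a b. starA C (a * b) = starA C b * starA C a) \<and>
     (\<forall>a. starA C (starA C a) = a) \<and> (\<forall>c. starA C (cpx C c) = cpx C (cnj c)) \<and>
     \<comment> \<open>Omega^1, Omega^2 are A-bimodules, C-bilinear\<close>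
     bimod (lact1 C) (ract1 C) \<and> bimod (lact2 C) (ract2 C) \<and>
     (\<forall>c w. lact1 C (cpx C c) w = ract1 C w (cpx C c)) \<and>
     (\<forall>c w. lact2 C (cpx C c) w = ract2 C w (cpx C c)) \<and>
     \<comment> \<open>wedge product: biadditive and associative with the module actions\<close>
     (\<forall>x y z. wedge C (x + y) z = wedge C x z + wedge C y z) \<and>
     (\<forall>x y z. wedge C x (y + z) = wedge C x y + wedge C x z) \<and>
     (\<forall>a x y. wedge C (lact1 C a x) y = lact2 C a (wedge C x y)) \<and>
     (\<forall>a x y. wedge C (ract1 C x a) y = wedge C x (lact1 C a y)) \<and>
     (\<forall>a x y. wedge C x (ract1 C y a) = ract2 C (wedge C x y) a) \<and>
     \<comment> \<open>exterior derivative: C-linear, graded Leibniz, d^2 = 0\<close>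
     (\<forall>a b. d0 C (a + b) = d0 C a + d0 C b) \<and>
     (\<forall>a b. d0 C (a * b) = ract1 C (d0 C a) b + lact1 C a (d0 C b)) \<and>
     (\<forall>c a. d0 C (cpx C c * a) = lact1 C (cpx C c) (d0 C a)) \<and>
     (\<forall>x y. d1 C (x + y) = d1 C x + d1 C y) \<and>
     (\<forall>a x. d1 C (lact1 C a x) = wedge C (d0 C a) x + lact2 C a (d1 C x)) \<and>
     (\<forall>a x. d1 C (ract1 C x a) = ract2 C (d1 C x) a - wedge C x (d0 C a)) \<and>
     (\<forall>c x. d1 C (lact1 C (cpx C c) x) = lact2 C (cpx C c) (d1 C x)) \<and>
     (\<forall>a. d1 C (d0 C a) = 0) \<and>
     \<comment> \<open>generation: Omega^1 = A dA, Omega^2 = Omega^1 wedge Omega^1\<close>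
     (\<forall>x. \<exists>l :: ('a \<times> 'a) list. x = (\<Sum>(a, b)\<leftarrow>l. lact1 C a (d0 C b))) \<and>
     (\<forall>w. \<exists>l :: ('w1 \<times> 'w1) list. w = (\<Sum>(x, y)\<leftarrow>l. wedge C x y)) \<and>
     \<comment> \<open>star operation on forms\<close>
     (\<forall>x y. star1 C (x + y) = star1 C x + star1 C y) \<and> (\<forall>x. star1 C (star1 C x) = x) \<and>
     (\<forall>a x. star1 C (lact1 C a x) = ract1 C (star1 C x) (starA C a)) \<and>
     (\<forall>a x. star1 C (ract1 C x a) = lact1 C (starA C a) (star1 C x)) \<and>
     (\<forall>x y. star2 C (x + y) = star2 C x + star2 C y) \<and> (\<forall>x. star2 C (star2 C x) = x) \<and>
     (\<forall>a x. star2 C (lact2 C a x) = ract2 C (star2 C x) (starA C a)) \<and>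
     (\<forall>a x. star2 C (ract2 C x a) = lact2 C (starA C a) (star2 C x)) \<and>
     (\<forall>x y. star2 C (wedge C x y) = - wedge C (star1 C y) (star1 C x)) \<and>
     (\<forall>a. d0 C (starA C a) = star1 C (d0 C a)) \<and>
     (\<forall>x. d1 C (star1 C x) = star2 C (d1 C x))"

text \<open>Almost complex structure: bimodule decompositions Omega^1 = Omega^{1,0} + Omega^{0,1},
  Omega^2 = Omega^{2,0} + Omega^{1,1} + Omega^{0,2} (given by the projections),
  wedge respects bidegree, star exchanges (p,q) and (q,p).\<close>
definition almost_complex :: "('a::ring_1, 'w1::ab_group_add, 'w2::ab_group_add) calc \<Rightarrow> bool" where
  "almost_complex C \<longleftrightarrow>
     bimod_map (lact1 C) (ract1 C) (p10 C) \<and> bimod_map (lact1 C) (ract1 C) (p01 C) \<and>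
     (\<forall>x. p10 C x + p01 C x = x) \<and>
     (\<forall>x. p10 C (p10 C x) = p10 C x) \<and> (\<forall>x. p01 C (p01 C x) = p01 C x) \<and>
     (\<forall>x. p10 C (p01 C x) = 0) \<and> (\<forall>x. p01 C (p10 C x) = 0) \<and>
     bimod_map (lact2 C) (ract2 C) (p20 C) \<and> bimod_map (lact2 C) (ract2 C) (p11 C) \<and>
     bimod_map (lact2 C) (ract2 C) (p02 C) \<and>
     (\<forall>w. p20 C w + p11 C w + p02 C w = w) \<and>
     (\<forall>w. p20 C (p20 C w) = p20 C w) \<and> (\<forall>w. p11 C (p11 C w) = p11 C w) \<and>
     (\<forall>w. p02 C (p02 C w) = p02 C w) \<and>
     (\<forall>w. p20 C (p11 C w) = 0) \<and> (\<forall>w. p20 C (p02 C w) = 0) \<and>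
     (\<forall>w. p11 C (p20 C w) = 0) \<and> (\<forall>w. p11 C (p02 C w) = 0) \<and>
     (\<forall>w. p02 C (p20 C w) = 0) \<and> (\<forall>w. p02 C (p11 C w) = 0) \<and>
     (\<forall>x y. p20 C (wedge C (p10 C x) (p10 C y)) = wedge C (p10 C x) (p10 C y)) \<and>
     (\<forall>x y. p11 C (wedge C (p10 C x) (p01 C y)) = wedge C (p10 C x) (p01 C y)) \<and>
     (\<forall>x y. p11 C (wedge C (p01 C x) (p10 C y)) = wedge C (p01 C x) (p10 C y)) \<and>
     (\<forall>x y. p02 C (wedge C (p01 C x) (p01 C y)) = wedge C (p01 C x) (p01 C y)) \<and>
     (\<forall>x. star1 C (p10 C x) = p01 C (star1 C x)) \<and>
     (\<forall>x. star1 C (p01 C x) = p10 C (star1 C x)) \<and>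
     (\<forall>w. star2 C (p20 C w) = p02 C (star2 C w)) \<and>
     (\<forall>w. star2 C (p11 C w) = p11 C (star2 C w)) \<and>
     (\<forall>w. star2 C (p02 C w) = p20 C (star2 C w))"

definition del0 :: "('a, 'w1, 'w2) calc \<Rightarrow> 'a \<Rightarrow> 'w1" where
  "del0 C a = p10 C (d0 C a)"
definition dbar0 :: "('a, 'w1, 'w2) calc \<Rightarrow> 'a \<Rightarrow> 'w1" where
  "dbar0 C a = p01 C (d0 C a)"
definition del1 :: "('a, 'w1, 'w2::ab_group_add) calc \<Rightarrow> 'w1 \<Rightarrow> 'w2" where
  "del1 C x = p20 C (d1 C (p10 C x)) + p11 C (d1 C (p01 C x))"
definition dbar1 :: "('a, 'w1, 'w2::ab_group_add) calc \<Rightarrow> 'w1 \<Rightarrow> 'w2" where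
  "dbar1 C x = p11 C (d1 C (p10 C x)) + p02 C (d1 C (p01 C x))"

text \<open>Integrability: d = del + delbar (no (p+2,q-1) or (p-1,q+2) components), del^2 = delbar^2 = 0.\<close>
definition integrable :: "('a::ring_1, 'w1::ab_group_add, 'w2::ab_group_add) calc \<Rightarrow> bool" where
  "integrable C \<longleftrightarrow>
     (\<forall>x. p02 C (d1 C (p10 C x)) = 0) \<and> (\<forall>x. p20 C (d1 C (p01 C x)) = 0) \<and>
     (\<forall>a. del1 C (del0 C a) = 0) \<and> (\<forall>a. dbar1 C (dbar0 C a) = 0)"

definition ac_star_calculus :: "('a::ring_1, 'w1::ab_group_add, 'w2::ab_group_add) calc \<Rightarrow> bool" where
  "ac_star_calculus C \<longleftrightarrow> star_calculus C \<and> almost_complex C \<and> integrable C"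

section \<open>Modules, holomorphic structures, metrics, connections\<close>

definition left_module :: "('a::ring_1 \<Rightarrow> 'e::ab_group_add \<Rightarrow> 'e) \<Rightarrow> bool" where
  "left_module act \<longleftrightarrow> (\<forall>e. act 1 e = e) \<and> (\<forall>a b e. act (a * b) e = act a (act b e)) \<and>
     (\<forall>a b e. act (a + b) e = act a e + act b e) \<and> (\<forall>a e f. act a (e + f) = act a e + act a f)"

text \<open>Finitely generated projective: a direct summand of a free module A^n
  (A^n represented as functions nat => A vanishing from n on).\<close>
definition fg_projective :: "('a::ring_1 \<Rightarrow> 'e::ab_group_add \<Rightarrow> 'e) \<Rightarrow> bool" where
  "fg_projective act \<longleftrightarrow>
     (\<exists>(n::nat) (\<iota>::'e \<Rightarrow> nat \<Rightarrow> 'a) (\<pi>::(nat \<Rightarrow> 'a) \<Rightarrow> 'e).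
        (\<forall>e i. n \<le> i \<longrightarrow> \<iota> e i = 0) \<and>
        (\<forall>e f. \<iota> (e + f) = (\<lambda>i. \<iota> e i + \<iota> f i)) \<and>
        (\<forall>a e. \<iota> (act a e) = (\<lambda>i. a * \<iota> e i)) \<and>
        (\<forall>v w. (\<forall>i\<ge>n. v i = 0) \<longrightarrow> (\<forall>i\<ge>n. w i = 0) \<longrightarrow> \<pi> (\<lambda>i. v i + w i) = \<pi> v + \<pi> w) \<and>
        (\<forall>a v. (\<forall>i\<ge>n. v i = 0) \<longrightarrow> \<pi> (\<lambda>i. a * v i) = act a (\<pi> v)) \<and>
        (\<forall>e. \<pi> (\<iota> e) = e))"

definition tlact :: "('a, 'w1, 'w2) calc \<Rightarrow> 'a \<Rightarrow> ('w1 \<times> 'e \<Rightarrow>\<^sub>0 int) \<Rightarrow> ('w1 \<times> 'e \<Rightarrow>\<^sub>0 int)" where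
  "tlact C a x = tmap (lact1 C a) x"
definition twedge :: "('a, 'w1, 'w2) calc \<Rightarrow> 'w1 \<Rightarrow> ('w1 \<times> 'e \<Rightarrow>\<^sub>0 int) \<Rightarrow> ('w2 \<times> 'e \<Rightarrow>\<^sub>0 int)" where
  "twedge C x y = tmap (wedge C x) y"

text \<open>Elements of Omega^{0,1} (x)_A E are
  represented by formal sums with first entries in Omega^{0,1}; since Omega^{0,1} is a bimodule
  direct summand of Omega^1, equalities there may be tested in Omega^1 (x)_A E, resp. Omega^2 (x)_A E.\<close>
definition holomorphic_structure ::
  "('a::ring_1, 'w1::ab_group_add, 'w2::ab_group_add) calc \<Rightarrow> ('a \<Rightarrow> 'e::ab_group_add \<Rightarrow> 'e)
    \<Rightarrow> ('e \<Rightarrow> ('w1 \<times> 'e \<Rightarrow>\<^sub>0 int)) \<Rightarrow> bool" where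
  "holomorphic_structure C act dbE \<longleftrightarrow>
     (\<forall>e. \<forall>k\<in>Poly_Mapping.keys (dbE e). p01 C (fst k) = fst k) \<and>
     (\<forall>e f. teq (ract1 C) act (dbE (e + f)) (dbE e + dbE f)) \<and>
     (\<forall>a e. teq (ract1 C) act (dbE (act a e)) (tn (dbar0 C a) e + tlact C a (dbE e))) \<and>
     (\<forall>e. teq (ract2 C) act
            (lin (\<lambda>(x, f). tn (dbar1 C x) f - twedge C x (dbE f)) (dbE e)) 0)"

text \<open>Non-degenerate hermitian inner product (as a map on E x Ebar, with the bimodule-map property
  written out), non-degeneracy: fbar |-> <-, fbar> is a bijection onto Hom_A(E, A).\<close>
definition nondeg_hermitian ::
  "('a::ring_1, 'w1, 'w2) calc \<Rightarrow> ('a \<Rightarrow> 'e::ab_group_add \<Rightarrow> 'e) \<Rightarrow> ('e \<Rightarrow> 'e \<Rightarrow> 'a) \<Rightarrow> bool" where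
  "nondeg_hermitian C act h \<longleftrightarrow>
     (\<forall>e e' f. h (e + e') f = h e f + h e' f) \<and> (\<forall>e f f'. h e (f + f') = h e f + h e f') \<and>
     (\<forall>a e f. h (act a e) f = a * h e f) \<and> (\<forall>a e f. h e (act a f) = h e f * starA C a) \<and>
     (\<forall>e f. starA C (h e f) = h f e) \<and>
     (\<forall>\<phi>::'e \<Rightarrow> 'a. (\<forall>e e'. \<phi> (e + e') = \<phi> e + \<phi> e') \<and> (\<forall>a e. \<phi> (act a e) = a * \<phi> e)
         \<longrightarrow> (\<exists>!f. \<forall>e. \<phi> e = h e f))"

definition left_connection ::
  "('a::ring_1, 'w1::ab_group_add, 'w2) calc \<Rightarrow> ('a \<Rightarrow> 'e::ab_group_add \<Rightarrow> 'e)
    \<Rightarrow> ('e \<Rightarrow> ('w1 \<times> 'e \<Rightarrow>\<^sub>0 int)) \<Rightarrow> bool" where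
  "left_connection C act nab \<longleftrightarrow>
     (\<forall>e f. teq (ract1 C) act (nab (e + f)) (nab e + nab f)) \<and>
     (\<forall>a e. teq (ract1 C) act (nab (act a e)) (tn (d0 C a) e + tlact C a (nab e)))"

definition preserves_metric ::
  "('a::ring_1, 'w1::ab_group_add, 'w2) calc \<Rightarrow> ('e \<Rightarrow> 'e \<Rightarrow> 'a)
    \<Rightarrow> ('e \<Rightarrow> ('w1 \<times> 'e \<Rightarrow>\<^sub>0 int)) \<Rightarrow> bool" where
  "preserves_metric C h nab \<longleftrightarrow>
     (\<forall>e f. d0 C (h e f) =
        lin (\<lambda>(x, g). ract1 C x (h g f)) (nab e) + lin (\<lambda>(x, g). lact1 C (h e g) (star1 C x)) (nab f))"

definition chern_connection ::
  "('a::ring_1, 'w1::ab_group_add, 'w2) calc \<Rightarrow> ('a \<Rightarrow> 'e::ab_group_add \<Rightarrow> 'e) \<Rightarrow> ('e \<Rightarrow> 'e \<Rightarrow> 'a)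
    \<Rightarrow> ('e \<Rightarrow> ('w1 \<times> 'e \<Rightarrow>\<^sub>0 int)) \<Rightarrow> ('e \<Rightarrow> ('w1 \<times> 'e \<Rightarrow>\<^sub>0 int)) \<Rightarrow> bool" where
  "chern_connection C act h dbE nab \<longleftrightarrow>
     left_connection C act nab \<and> preserves_metric C h nab \<and>
     (\<forall>e. teq (ract1 C) act (tmap (p01 C) (nab e)) (dbE e))"

definition curvature ::
  "('a, 'w1, 'w2::ab_group_add) calc \<Rightarrow> ('e \<Rightarrow> ('w1 \<times> 'e \<Rightarrow>\<^sub>0 int)) \<Rightarrow> 'e \<Rightarrow> ('w2 \<times> 'e \<Rightarrow>\<^sub>0 int)" where
  "curvature C nab e = lin (\<lambda>(x, f). tn (d1 C x) f - twedge C x (nab f)) (nab e)"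

end

theory Submission
  imports Defs
begin


lemma zscale_0[simp]: "zscale 0 g = 0" by (simp add: zscale_def)

lemma zscale_succ: "zscale (n+1) g = zscale n g + g"
proof (cases "0 \<le> n")
  case True
  then have "nat (n+1) = Suc (nat n)" by simp
  then show ?thesis using True by (simp add: zscale_def)
next
  case False
  then have e: "nat (-n) = Suc (nat (-(n+1)))" by simp
  show ?thesis
  proof (cases "n = -1")
    case True then show ?thesis by (simp add: zscale_def)
  next
    case False
    with \<open>\<not> 0 \<le> n\<close> have "\<not> 0 \<le> n + 1" by simp
    then show ?thesis using \<open>\<not> 0 \<le> n\<close> e by (simp add: zscale_def)
  qed
qed

lemma zscale_pred: "zscale (n-1) g = zscale n g - g"
  using zscale_succ[of "n-1" g] by (simp add: algebra_simps)

lemma zscale_add_left: "zscale (m+n) g = zscale m g + zscale n g"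
proof (induction n rule: int_induct[where k=0])
  case base then show ?case by simp
next
  case (step1 i)
  have "zscale (m + (i+1)) g = zscale ((m+i)+1) g" by (simp add: add.assoc)
  also have "\<dots> = zscale (m+i) g + g" by (rule zscale_succ)
  finally show ?case using step1.IH zscale_succ[of i g] by (metis add.assoc)
next
  case (step2 i)
  have "zscale (m + (i-1)) g = zscale ((m+i)-1) g" by (simp add: algebra_simps)
  also have "\<dots> = zscale (m+i) g - g" by (rule zscale_pred)
  finally show ?case using step2.IH zscale_pred[of i g] by (metis add_diff_eq)
qed

lemma zscale_hom:
  assumes "\<And>a b. T (a + b) = T a + T b"
  shows "T (zscale n g) = zscale n (T g)"
proof -
  have T0: "T 0 = 0" using assms[of 0 0] by simp
  have Tn: "T (- a) = - T a" for a using assms[of a "-a"] T0 by (metis add.right_inverse minus_unique)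
  show ?thesis
  proof (induction n rule: int_induct[where k=0])
    case base then show ?case by (simp add: T0)
  next
    case (step1 i) then show ?case by (simp add: zscale_succ assms)
  next
    case (step2 i)
    have Td: "T (x - y) = T x - T y" for x y
      using assms[of x "-y"] Tn[of y] by (simp only: diff_conv_add_uminus)
    from step2 show ?case by (simp add: zscale_pred Td)
  qed
qed

lemma zscale_add_right: "zscale n (a + b) = zscale n a + zscale n b"
proof (induction n rule: int_induct[where k=0])
  case base then show ?case by simp
next
  case (step1 i) then show ?case by (simp only: zscale_succ) (simp add: algebra_simps)
next
  case (step2 i) then show ?case by (simp only: zscale_pred) (simp add: algebra_simps)
qed

lemma zscale_zero_right[simp]: "zscale n 0 = 0"
  using zscale_add_right[of n 0 0] by simp
lemma zscale_one[simp]: "zscale 1 g = g"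
  using zscale_succ[of 0 g] by simp
lemma zscale_neg_right: "zscale n (- a) = - zscale n a"
  using zscale_add_right[of n a "-a"] by (simp add: minus_unique)
lemma zscale_diff_right: "zscale n (a - b) = zscale n a - zscale n b"
  using zscale_add_right[of n a "-b"] zscale_neg_right[of n b] by (simp only: diff_conv_add_uminus)
lemma zscale_neg_left: "zscale (- n) a = - zscale n a"
  using zscale_add_left[of n "-n" a] by (simp add: minus_unique)
lemma zscale_comm: "zscale m (zscale n g) = zscale n (zscale m g)"
  by (rule zscale_hom) (simp add: zscale_add_right)

lemma zscale_single: "zscale n (Poly_Mapping.single k (1::int)) = Poly_Mapping.single k n"
proof (induction n rule: int_induct[where k=0])
  case base then show ?case by simp
next
  case (step1 i) then show ?case by (simp add: zscale_succ flip: single_add)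
next
  case (step2 i) then show ?case by (simp add: zscale_pred flip: single_diff)
qed



lemma hom_zero:
  fixes T :: "'a::ab_group_add \<Rightarrow> 'b::ab_group_add"
  assumes "\<And>a b. T (a + b) = T a + T b"
  shows "T 0 = 0"
proof -
  have "T (0 + 0) = T 0 + T 0" by (rule assms)
  then have "T 0 = T 0 + T 0" by simp
  then show ?thesis using add_cancel_right_right[of "T 0" "T 0"] by simp
qed

lemma add_hom_sum:
  fixes T :: "'a::ab_group_add \<Rightarrow> 'b::ab_group_add"
  assumes "\<And>a b. T (a + b) = T a + T b"
  shows "T (\<Sum>i\<in>S. g i) = (\<Sum>i\<in>S. T (g i))"
  using hom_zero[of T, OF assms]
  by (induction S rule: infinite_finite_induct) (simp_all add: assms)

lemma lin_superset:
  assumes "finite S" "Poly_Mapping.keys x \<subseteq> S"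
  shows "lin f x = (\<Sum>k\<in>S. zscale (Poly_Mapping.lookup x k) (f k))"
  unfolding lin_def
  by (rule sum.mono_neutral_left) (use assms in \<open>auto simp: in_keys_iff\<close>)

lemma lin_add: "lin f (x + y) = lin f x + lin f y"
proof -
  let ?S = "Poly_Mapping.keys x \<union> Poly_Mapping.keys y"
  have "lin f (x + y) = (\<Sum>k\<in>?S. zscale (Poly_Mapping.lookup (x+y) k) (f k))"
    by (rule lin_superset) (use keys_add[of x y] in auto)
  also have "\<dots> = (\<Sum>k\<in>?S. zscale (Poly_Mapping.lookup x k) (f k)) + (\<Sum>k\<in>?S. zscale (Poly_Mapping.lookup y k) (f k))"
    by (simp add: lookup_add zscale_add_left sum.distrib)
  also have "\<dots> = lin f x + lin f y"
    by (simp add: lin_superset[symmetric])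
  finally show ?thesis .
qed

lemma lin_zero[simp]: "lin f 0 = 0" by (simp add: lin_def)

lemma lin_neg: "lin f (- x) = - lin f x"
  using lin_add[of f x "-x"] by (simp add: minus_unique)

lemma lin_diff: "lin f (x - y) = lin f x - lin f y"
  using lin_add[of f x "-y"] lin_neg[of f y] by (simp only: diff_conv_add_uminus)

lemma lin_tn[simp]: "lin f (tn w e) = f (w, e)"
  by (simp add: lin_def tn_def)

lemma lin_hom:
  assumes "\<And>a b. T (a + b) = T a + T b"
  shows "T (lin f x) = lin (\<lambda>k. T (f k)) x"
  unfolding lin_def by (simp add: add_hom_sum[OF assms] zscale_hom[OF assms])

lemma lin_fadd: "lin (\<lambda>k. f k + g k) x = lin f x + lin g x"
  unfolding lin_def by (simp add: zscale_add_right sum.distrib)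

lemma lin_fneg: "lin (\<lambda>k. - f k) x = - lin f x"
  unfolding lin_def by (simp add: zscale_neg_right sum_negf)

lemma lin_fdiff: "lin (\<lambda>k. f k - g k) x = lin f x - lin g x"
  unfolding lin_def by (simp add: zscale_diff_right sum_subtractf)

lemma lin_fzero: "lin (\<lambda>k. 0) x = 0"
  unfolding lin_def by simp

lemma lin_cong: "(\<And>k. k \<in> Poly_Mapping.keys x \<Longrightarrow> f k = g k) \<Longrightarrow> lin f x = lin g x"
  unfolding lin_def by simp

lemma lin_swap: "lin (\<lambda>k. lin (\<lambda>j. F k j) y) x = lin (\<lambda>j. lin (\<lambda>k. F k j) x) y"
proof -
  have h: "zscale n (\<Sum>i\<in>S. g i) = (\<Sum>i\<in>S. zscale n (g i))" for n S g
    by (rule add_hom_sum) (simp add: zscale_add_right)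
  show ?thesis
    unfolding lin_def h
    by (subst sum.swap) (simp add: zscale_comm)
qed

lemma lin_tmap: "lin f (tmap p x) = lin (\<lambda>(w, e). f (p w, e)) x"
proof -
  have "lin f (tmap p x) = lin (\<lambda>k. lin f (case k of (w, e) \<Rightarrow> tn (p w) e)) x"
    unfolding tmap_def by (rule lin_hom) (simp add: lin_add)
  also have "\<dots> = lin (\<lambda>(w, e). f (p w, e)) x"
    by (rule lin_cong) auto
  finally show ?thesis .
qed

lemma zscale_int: "zscale n (1::int) = n"
proof (induction n rule: int_induct[where k=0])
  case base then show ?case by simp
next
  case (step1 i) then show ?case by (simp add: zscale_succ)
next
  case (step2 i) then show ?case by (simp add: zscale_pred)
qed

lemma lin_self: "lin (\<lambda>(w, e). tn w e) x = x"
proof (rule poly_mapping_eqI)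
  fix j
  have "Poly_Mapping.lookup (lin (\<lambda>(w, e). tn w e) x) j
      = lin (\<lambda>k. Poly_Mapping.lookup (case k of (w, e) \<Rightarrow> tn w e) j) x"
    by (rule lin_hom) (simp add: lookup_add)
  also have "\<dots> = lin (\<lambda>k. (1 when k = j)) x"
    by (rule lin_cong) (auto simp: tn_def lookup_single)
  also have "\<dots> = Poly_Mapping.lookup x j"
  proof -
    have "lin (\<lambda>k. (1 when k = j)) x = (\<Sum>k\<in>Poly_Mapping.keys x \<union> {j}. zscale (Poly_Mapping.lookup x k) ((1::int) when k = j))"
      by (rule lin_superset) auto
    also have "\<dots> = zscale (Poly_Mapping.lookup x j) (1::int)"
      by (subst sum.remove[of _ j]) (auto simp: when_def)
    finally show ?thesis by (simp add: zscale_int)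
  qed
  finally show "Poly_Mapping.lookup (lin (\<lambda>(w, e). tn w e) x) j = Poly_Mapping.lookup x j" .
qed

lemma lin_null:
  assumes a1: "\<And>w w' e. f (w + w', e) = f (w, e) + f (w', e)"
    and a2: "\<And>w e e'. f (w, e + e') = f (w, e) + f (w, e')"
    and bal: "\<And>w a e. f (r w a, e) = f (w, act a e)"
    and x: "x \<in> tens_null r act"
  shows "lin f x = 0"
  using x
proof induction
  case zero then show ?case by simp
next
  case (add x y) then show ?case by (simp add: lin_add)
next
  case (neg x) then show ?case by (simp add: lin_neg)
next
  case (addl w w' e) then show ?case by (simp add: lin_diff a1)
next
  case (addr w e e') then show ?case by (simp add: lin_diff a2)
next
  case (bal w a e) then show ?case by (simp add: lin_diff assms(3))
qed

lemma lin_teq: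
  assumes "\<And>w w' e. f (w + w', e) = f (w, e) + f (w', e)"
    and "\<And>w e e'. f (w, e + e') = f (w, e) + f (w, e')"
    and "\<And>w a e. f (r w a, e) = f (w, act a e)"
    and "teq r act x y"
  shows "lin f x = lin f y"
proof -
  have "lin f (x - y) = 0" using assms unfolding teq_def by (intro lin_null) auto
  then show ?thesis by (simp add: lin_diff)
qed

lemma tn_diff: "x \<in> tens_null r act \<Longrightarrow> y \<in> tens_null r act \<Longrightarrow> x - y \<in> tens_null r act"
  unfolding diff_conv_add_uminus by (intro tens_null.add tens_null.neg)

lemma tn_sum: "(\<And>i. i \<in> S \<Longrightarrow> g i \<in> tens_null r act) \<Longrightarrow> (\<Sum>i\<in>S. g i) \<in> tens_null r act"
  by (induction S rule: infinite_finite_induct) (auto intro: tens_null.intros)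

lemma tn_zscale: "x \<in> tens_null r act \<Longrightarrow> zscale n x \<in> tens_null r act"
proof (induction n rule: int_induct[where k=0])
  case base then show ?case by (simp add: tens_null.zero)
next
  case (step1 i) then show ?case by (simp add: zscale_succ tens_null.add)
next
  case (step2 i) then show ?case by (simp add: zscale_pred tn_diff)
qed

lemma lin_in_null: "(\<And>k. k \<in> Poly_Mapping.keys x \<Longrightarrow> F k \<in> tens_null r act) \<Longrightarrow> lin F x \<in> tens_null r act"
  unfolding lin_def by (intro tn_sum tn_zscale) auto

lemma addmod_lin:
  assumes T: "\<And>a b. T (a + b) - T a - T b \<in> tens_null r act"
  shows "T (lin F x) - lin (\<lambda>k. T (F k)) x \<in> tens_null r act"
proof -
  let ?N = "tens_null r act"
  have T0: "T 0 \<in> ?N" using T[of 0 0] tens_null.neg by fastforce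
  have Tn: "T (- a) + T a \<in> ?N" for a
  proof -
    have "T 0 - (T (a + - a) - T a - T (- a)) \<in> ?N" using T[of a "-a"] T0 tn_diff by blast
    then show ?thesis by (simp add: algebra_simps)
  qed
  have Z: "T (zscale n g) - zscale n (T g) \<in> ?N" for n g
  proof (induction n rule: int_induct[where k=0])
    case base then show ?case using T0 by simp
  next
    case (step1 i)
    have "(T (zscale i g + g) - T (zscale i g) - T g) + (T (zscale i g) - zscale i (T g)) \<in> ?N"
      using T step1 tens_null.add by blast
    then show ?case unfolding zscale_succ by (simp add: algebra_simps)
  next
    case (step2 i)
    have "(T (zscale i g + - g) - T (zscale i g) - T (- g)) + (T (zscale i g) - zscale i (T g)) + (T (- g) + T g) \<in> ?N"
      using T step2 Tn tens_null.add by blast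
    then show ?case unfolding zscale_pred by (simp add: algebra_simps)
  qed
  have S: "T (\<Sum>i\<in>S. g i) - (\<Sum>i\<in>S. T (g i)) \<in> ?N" for S and g :: "_ \<Rightarrow> _"
  proof (induction S rule: infinite_finite_induct)
    case (infinite A) then show ?case using T0 by simp
  next
    case empty then show ?case using T0 by simp
  next
    case (insert y F)
    have "(T (g y + sum g F) - T (g y) - T (sum g F)) + (T (sum g F) - (\<Sum>i\<in>F. T (g i))) \<in> ?N"
      using T insert tens_null.add by blast
    then show ?case using insert by (simp add: algebra_simps)
  qed
  have "T (lin F x) - (\<Sum>k\<in>Poly_Mapping.keys x. T (zscale (Poly_Mapping.lookup x k) (F k))) \<in> ?N"
    unfolding lin_def by (rule S)
  moreover have "(\<Sum>k\<in>Poly_Mapping.keys x. T (zscale (Poly_Mapping.lookup x k) (F k)) - zscale (Poly_Mapping.lookup x k) (T (F k))) \<in> ?N"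
    by (rule tn_sum) (rule Z)
  ultimately have "(T (lin F x) - (\<Sum>k\<in>Poly_Mapping.keys x. T (zscale (Poly_Mapping.lookup x k) (F k))))
     + (\<Sum>k\<in>Poly_Mapping.keys x. T (zscale (Poly_Mapping.lookup x k) (F k)) - zscale (Poly_Mapping.lookup x k) (T (F k))) \<in> ?N"
    by (rule tens_null.add)
  then show ?thesis by (simp add: lin_def sum_subtractf)
qed



lemma lin_fsum: "lin (\<lambda>k. \<Sum>i\<in>S. F i k) x = (\<Sum>i\<in>S. lin (F i) x)"
  by (induction S rule: infinite_finite_induct) (simp_all add: lin_fzero lin_fadd)

lemma tn_zero_right: "tn w 0 \<in> tens_null r act"
proof -
  have "- (tn w (0 + 0) - tn w 0 - tn w 0) \<in> tens_null r act"
    by (intro tens_null.neg tens_null.addr)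
  then show ?thesis by simp
qed

lemma tn_zero_left: "tn 0 e \<in> tens_null r act"
proof -
  have "- (tn (0 + 0) e - tn 0 e - tn 0 e) \<in> tens_null r act"
    by (intro tens_null.neg tens_null.addl)
  then show ?thesis by simp
qed

lemma tn_sum_right: fixes m :: nat shows "tn w (\<Sum>i<m. x i) - (\<Sum>i<m. tn w (x i)) \<in> tens_null r act"
proof (induction m)
  case 0 then show ?case using tn_zero_right by simp
next
  case (Suc m)
  have "(tn w ((\<Sum>i<m. x i) + x m) - tn w (\<Sum>i<m. x i) - tn w (x m)) + (tn w (\<Sum>i<m. x i) - (\<Sum>i<m. tn w (x i))) \<in> tens_null r act"
    using Suc tens_null.addr tens_null.add by blast
  then show ?case by (simp add: algebra_simps)
qed

lemma dual_null:
  fixes r :: "'w::ab_group_add \<Rightarrow> 'a::ring_1 \<Rightarrow> 'w" and act :: "'a \<Rightarrow> 'e::ab_group_add \<Rightarrow> 'e"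
  assumes fg: "fg_projective act"
    and hyp: "\<And>\<phi>. (\<forall>e e'. \<phi> (e + e') = \<phi> e + \<phi> e') \<Longrightarrow> (\<forall>a e. \<phi> (act a e) = a * \<phi> e)
        \<Longrightarrow> lin (\<lambda>(w, g). r w (\<phi> g)) \<omega> = 0"
  shows "\<omega> \<in> tens_null r act"
proof -
  let ?N = "tens_null r act"
  obtain n \<iota> \<pi> where
    i0: "\<And>e i. n \<le> i \<Longrightarrow> (\<iota>::'e \<Rightarrow> nat \<Rightarrow> 'a) e i = 0" and
    iadd: "\<And>e f. \<iota> (e + f) = (\<lambda>i. \<iota> e i + \<iota> f i)" and
    ilin: "\<And>a e. \<iota> (act a e) = (\<lambda>i. a * \<iota> e i)" and
    padd: "\<And>v w. (\<forall>i\<ge>n. v i = 0) \<Longrightarrow> (\<forall>i\<ge>n. w i = 0) \<Longrightarrow> \<pi> (\<lambda>i. v i + w i) = \<pi> v + \<pi> w" and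
    plin: "\<And>a v. (\<forall>i\<ge>n. v i = 0) \<Longrightarrow> \<pi> (\<lambda>i. a * v i) = act a (\<pi> v)" and
    pi: "\<And>e. \<pi> (\<iota> e) = e"
    using fg unfolding fg_projective_def by blast
  define \<delta> :: "nat \<Rightarrow> nat \<Rightarrow> 'a" where "\<delta> i = (\<lambda>j. if j = i then 1 else 0)" for i
  define b where "b i = \<pi> (\<delta> i)" for i
  have pi0: "\<pi> (\<lambda>j. 0) = 0"
  proof -
    have "\<pi> (\<lambda>j. 0 + 0) = \<pi> (\<lambda>j. 0) + \<pi> (\<lambda>j. 0)" by (rule padd) auto
    then show ?thesis by simp
  qed
  have psum: "m \<le> n \<Longrightarrow> \<pi> (\<lambda>j. \<Sum>i<m. c i * \<delta> i j) = (\<Sum>i<m. act (c i) (b i))" for m c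
  proof (induction m)
    case 0 then show ?case using pi0 by simp
  next
    case (Suc m)
    have v1: "\<forall>j\<ge>n. (\<Sum>i<m. c i * \<delta> i j) = 0" using Suc.prems by (auto simp: \<delta>_def)
    have v2: "\<forall>j\<ge>n. c m * \<delta> m j = 0" using Suc.prems by (auto simp: \<delta>_def)
    have v3: "\<forall>j\<ge>n. \<delta> m j = 0" using Suc.prems by (auto simp: \<delta>_def)
    have "\<pi> (\<lambda>j. \<Sum>i<Suc m. c i * \<delta> i j) = \<pi> (\<lambda>j. (\<Sum>i<m. c i * \<delta> i j) + c m * \<delta> m j)" by simp
    also have "\<dots> = \<pi> (\<lambda>j. \<Sum>i<m. c i * \<delta> i j) + \<pi> (\<lambda>j. c m * \<delta> m j)"
      using v1 v2 by (rule padd)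
    also have "\<pi> (\<lambda>j. c m * \<delta> m j) = act (c m) (b m)" unfolding b_def using v3 by (rule plin)
    finally show ?case using Suc by simp
  qed
  have decomp: "g = (\<Sum>i<n. act (\<iota> g i) (b i))" for g
  proof -
    have "\<iota> g = (\<lambda>j. \<Sum>i<n. \<iota> g i * \<delta> i j)"
    proof
      fix j
      show "\<iota> g j = (\<Sum>i<n. \<iota> g i * \<delta> i j)"
      proof (cases "j < n")
        case True
        have "(\<Sum>i<n. \<iota> g i * \<delta> i j) = (\<Sum>i<n. if i = j then \<iota> g i else 0)"
          by (rule sum.cong) (auto simp: \<delta>_def)
        then show ?thesis using True by simp
      next
        case False then show ?thesis by (simp add: \<delta>_def i0)
      qed
    qed
    then have "\<pi> (\<iota> g) = (\<Sum>i<n. act (\<iota> g i) (b i))" using psum[of n "\<iota> g"] by simp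
    then show ?thesis using pi by simp
  qed
  have step1: "tn w g - (\<Sum>i<n. tn (r w (\<iota> g i)) (b i)) \<in> ?N" for w g
  proof -
    have A: "tn w (\<Sum>i<n. act (\<iota> g i) (b i)) - (\<Sum>i<n. tn w (act (\<iota> g i) (b i))) \<in> ?N"
      by (rule tn_sum_right)
    have B: "(\<Sum>i<n. tn w (act (\<iota> g i) (b i)) - tn (r w (\<iota> g i)) (b i)) \<in> ?N"
      by (intro tn_sum) (metis minus_diff_eq tens_null.bal tens_null.neg)
    have "(tn w (\<Sum>i<n. act (\<iota> g i) (b i)) - (\<Sum>i<n. tn w (act (\<iota> g i) (b i))))
       + (\<Sum>i<n. tn w (act (\<iota> g i) (b i)) - tn (r w (\<iota> g i)) (b i)) \<in> ?N"
      using A B by (rule tens_null.add)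
    then show ?thesis by (simp add: sum_subtractf flip: decomp)
  qed
  let ?L = "lin (\<lambda>(w, g). \<Sum>i<n. tn (r w (\<iota> g i)) (b i)) \<omega>"
  have C1: "\<omega> - ?L \<in> ?N"
  proof -
    have "lin (\<lambda>k. (case k of (w, g) \<Rightarrow> tn w g) - (case k of (w, g) \<Rightarrow> \<Sum>i<n. tn (r w (\<iota> g i)) (b i))) \<omega> \<in> ?N"
      by (rule lin_in_null) (auto simp: step1)
    then show ?thesis by (simp add: lin_fdiff lin_self)
  qed
  have C2: "lin (\<lambda>(w, g). tn (r w (\<iota> g i)) (b i)) \<omega> \<in> ?N" for i
  proof -
    let ?F = "\<lambda>(w, g). r w (\<iota> g i)"
    have "tn (lin ?F \<omega>) (b i) - lin (\<lambda>k. tn (?F k) (b i)) \<omega> \<in> ?N"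
      by (rule addmod_lin) (rule tens_null.addl)
    moreover have "lin ?F \<omega> = 0"
      by (rule hyp) (auto simp: iadd ilin)
    moreover have "lin (\<lambda>k. tn (?F k) (b i)) \<omega> = lin (\<lambda>(w, g). tn (r w (\<iota> g i)) (b i)) \<omega>"
      by (rule lin_cong) auto
    ultimately have "tn 0 (b i) - lin (\<lambda>(w, g). tn (r w (\<iota> g i)) (b i)) \<omega> \<in> ?N" by simp
    then have "tn 0 (b i) - (tn 0 (b i) - lin (\<lambda>(w, g). tn (r w (\<iota> g i)) (b i)) \<omega>) \<in> ?N"
      by (rule tn_diff[OF tn_zero_left])
    then show ?thesis by simp
  qed
  have "?L = (\<Sum>i<n. lin (\<lambda>(w, g). tn (r w (\<iota> g i)) (b i)) \<omega>)"
  proof -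
    have "?L = lin (\<lambda>k. \<Sum>i<n. (\<lambda>(w, g). tn (r w (\<iota> g i)) (b i)) k) \<omega>"
      by (rule lin_cong) auto
    then show ?thesis by (simp add: lin_fsum)
  qed
  then have "?L \<in> ?N" using C2 by (simp add: tn_sum)
  then have "(\<omega> - ?L) + ?L \<in> ?N" using C1 by (rule tens_null.add[rotated])
  then show ?thesis by simp
qed



locale chern =
  fixes C :: "('a::ring_1, 'w1::ab_group_add, 'w2::ab_group_add) calc"
    and act :: "'a \<Rightarrow> 'e::ab_group_add \<Rightarrow> 'e"
    and h :: "'e \<Rightarrow> 'e \<Rightarrow> 'a"
    and dbE nab :: "'e \<Rightarrow> ('w1 \<times> 'e \<Rightarrow>\<^sub>0 int)"
  assumes ac: "ac_star_calculus C"
    and lm: "left_module act"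
    and fg: "fg_projective act"
    and hol: "holomorphic_structure C act dbE"
    and nd: "nondeg_hermitian C act h"
    and ch: "chern_connection C act h dbE nab"
begin

lemma sc: "star_calculus C" using ac unfolding ac_star_calculus_def by blast
lemma acx: "almost_complex C" using ac unfolding ac_star_calculus_def by blast
lemma itg: "integrable C" using ac unfolding ac_star_calculus_def by blast
lemma b1: "bimod (lact1 C) (ract1 C)" using sc unfolding star_calculus_def by simp
lemma b2: "bimod (lact2 C) (ract2 C)" using sc unfolding star_calculus_def by simp

lemma r1_add: "ract1 C (w + w') a = ract1 C w a + ract1 C w' a" using b1 unfolding bimod_def by blast
lemma r1_mult: "ract1 C (ract1 C w a) b = ract1 C w (a * b)" using b1 unfolding bimod_def by metis
lemma l1_add: "lact1 C a (w + w') = lact1 C a w + lact1 C a w'" using b1 unfolding bimod_def by blast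
lemma l1_r1: "lact1 C a (ract1 C w b) = ract1 C (lact1 C a w) b" using b1 unfolding bimod_def by blast
lemma r2_add: "ract2 C (w + w') a = ract2 C w a + ract2 C w' a" using b2 unfolding bimod_def by blast
lemma r2_mult: "ract2 C (ract2 C w a) b = ract2 C w (a * b)" using b2 unfolding bimod_def by metis

lemma wedge_addl: "wedge C (x + y) z = wedge C x z + wedge C y z" using sc unfolding star_calculus_def by simp
lemma wedge_addr: "wedge C x (y + z) = wedge C x y + wedge C x z" using sc unfolding star_calculus_def by simp
lemma wedge_r1l: "wedge C (ract1 C x a) y = wedge C x (lact1 C a y)" using sc unfolding star_calculus_def by simp
lemma wedge_r1r: "wedge C x (ract1 C y a) = ract2 C (wedge C x y) a" using sc unfolding star_calculus_def by simp
lemma d0_add: "d0 C (a + b) = d0 C a + d0 C b" using sc unfolding star_calculus_def by simp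
lemma d1_add: "d1 C (x + y) = d1 C x + d1 C y" using sc unfolding star_calculus_def by simp
lemma d1_r1: "d1 C (ract1 C x a) = ract2 C (d1 C x) a - wedge C x (d0 C a)" using sc unfolding star_calculus_def by simp
lemma d1_d0: "d1 C (d0 C a) = 0" using sc unfolding star_calculus_def by simp
lemma s1_add: "star1 C (x + y) = star1 C x + star1 C y" using sc unfolding star_calculus_def by simp
lemma s1_s1: "star1 C (star1 C x) = x" using sc unfolding star_calculus_def by simp
lemma s1_l1: "star1 C (lact1 C a x) = ract1 C (star1 C x) (starA C a)" using sc unfolding star_calculus_def by simp
lemma s1_r1: "star1 C (ract1 C x a) = lact1 C (starA C a) (star1 C x)" using sc unfolding star_calculus_def by simp
lemma s2_add: "star2 C (x + y) = star2 C x + star2 C y" using sc unfolding star_calculus_def by simp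
lemma s2_wedge: "star2 C (wedge C x y) = - wedge C (star1 C y) (star1 C x)" using sc unfolding star_calculus_def by simp
lemma d1_s1: "d1 C (star1 C x) = star2 C (d1 C x)" using sc unfolding star_calculus_def by simp

lemma bm10: "bimod_map (lact1 C) (ract1 C) (p10 C)" using acx unfolding almost_complex_def by simp
lemma bm01: "bimod_map (lact1 C) (ract1 C) (p01 C)" using acx unfolding almost_complex_def by simp
lemma bm20: "bimod_map (lact2 C) (ract2 C) (p20 C)" using acx unfolding almost_complex_def by simp
lemma bm11: "bimod_map (lact2 C) (ract2 C) (p11 C)" using acx unfolding almost_complex_def by simp
lemma bm02: "bimod_map (lact2 C) (ract2 C) (p02 C)" using acx unfolding almost_complex_def by simp
lemma p10_add: "p10 C (x + y) = p10 C x + p10 C y" using bm10 unfolding bimod_map_def by blast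
lemma p01_add: "p01 C (x + y) = p01 C x + p01 C y" using bm01 unfolding bimod_map_def by blast
lemma p01_r1: "p01 C (ract1 C x a) = ract1 C (p01 C x) a" using bm01 unfolding bimod_map_def by blast
lemma p20_add: "p20 C (x + y) = p20 C x + p20 C y" using bm20 unfolding bimod_map_def by blast
lemma p11_add: "p11 C (x + y) = p11 C x + p11 C y" using bm11 unfolding bimod_map_def by blast
lemma p02_add: "p02 C (x + y) = p02 C x + p02 C y" using bm02 unfolding bimod_map_def by blast
lemma p02_r2: "p02 C (ract2 C x a) = ract2 C (p02 C x) a" using bm02 unfolding bimod_map_def by blast
lemma p20_r2: "p20 C (ract2 C x a) = ract2 C (p20 C x) a" using bm20 unfolding bimod_map_def by blast
lemma p_split: "p10 C x + p01 C x = x" using acx unfolding almost_complex_def by simp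
lemma p01_p01: "p01 C (p01 C x) = p01 C x" using acx unfolding almost_complex_def by simp
lemma p10_p01: "p10 C (p01 C x) = 0" using acx unfolding almost_complex_def by simp
lemma p02_p20: "p02 C (p20 C w) = 0" using acx unfolding almost_complex_def by simp
lemma p02_p11: "p02 C (p11 C w) = 0" using acx unfolding almost_complex_def by simp
lemma w20: "p20 C (wedge C (p10 C x) (p10 C y)) = wedge C (p10 C x) (p10 C y)" using acx unfolding almost_complex_def by simp
lemma w11a: "p11 C (wedge C (p10 C x) (p01 C y)) = wedge C (p10 C x) (p01 C y)" using acx unfolding almost_complex_def by simp
lemma w11b: "p11 C (wedge C (p01 C x) (p10 C y)) = wedge C (p01 C x) (p10 C y)" using acx unfolding almost_complex_def by simp
lemma w02: "p02 C (wedge C (p01 C x) (p01 C y)) = wedge C (p01 C x) (p01 C y)" using acx unfolding almost_complex_def by simp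
lemma s2_p02: "star2 C (p02 C w) = p20 C (star2 C w)" using acx unfolding almost_complex_def by simp
lemma p02_d1_p10: "p02 C (d1 C (p10 C x)) = 0" using itg unfolding integrable_def by blast

lemma h_addl: "h (e + e') f = h e f + h e' f" using nd unfolding nondeg_hermitian_def by blast
lemma h_addr: "h e (f + f') = h e f + h e f'" using nd unfolding nondeg_hermitian_def by blast
lemma h_lin: "h (act a e) f = a * h e f" using nd unfolding nondeg_hermitian_def by blast
lemma h_sym: "starA C (h e f) = h f e" using nd unfolding nondeg_hermitian_def by blast
lemma h_nd: "(\<forall>e e'. \<phi> (e + e') = \<phi> e + \<phi> e') \<Longrightarrow> (\<forall>a e. \<phi> (act a e) = a * \<phi> e) \<Longrightarrow> \<exists>f. \<forall>e. \<phi> e = h e f"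
  using nd unfolding nondeg_hermitian_def by metis

end



context chern begin

lemma r1_addr: "ract1 C w (a + b) = ract1 C w a + ract1 C w b" using b1 unfolding bimod_def by blast
lemma r2_addr: "ract2 C w (a + b) = ract2 C w a + ract2 C w b" using b2 unfolding bimod_def by blast

definition P :: "'e \<Rightarrow> ('w2 \<times> 'e \<Rightarrow>\<^sub>0 int) \<Rightarrow> 'w2" where
  "P f \<omega> = lin (\<lambda>(w, g). ract2 C w (h g f)) \<omega>"
definition Q :: "'e \<Rightarrow> ('w1 \<times> 'e \<Rightarrow>\<^sub>0 int) \<Rightarrow> 'w1" where
  "Q f \<omega> = lin (\<lambda>(w, g). ract1 C w (h g f)) \<omega>"

lemma P_add: "P f (x + y) = P f x + P f y" unfolding P_def by (rule lin_add)
lemma Q_add: "Q f (x + y) = Q f x + Q f y" unfolding Q_def by (rule lin_add)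
lemma P_diff: "P f (x - y) = P f x - P f y" unfolding P_def by (rule lin_diff)
lemma Q_diff: "Q f (x - y) = Q f x - Q f y" unfolding Q_def by (rule lin_diff)
lemma P_tn[simp]: "P f (tn w g) = ract2 C w (h g f)" unfolding P_def by simp
lemma Q_tn[simp]: "Q f (tn w g) = ract1 C w (h g f)" unfolding Q_def by simp

lemma P_null: "x \<in> tens_null (ract2 C) act \<Longrightarrow> P f x = 0"
  unfolding P_def
  by (rule lin_null) (auto simp: r2_add r2_addr h_addl r2_mult h_lin)

lemma Q_null: "x \<in> tens_null (ract1 C) act \<Longrightarrow> Q f x = 0"
  unfolding Q_def
  by (rule lin_null) (auto simp: r1_add r1_addr h_addl r1_mult h_lin)

lemma P_teq: "teq (ract2 C) act x y \<Longrightarrow> P f x = P f y"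
  unfolding teq_def using P_null P_diff by (metis eq_iff_diff_eq_0)

lemma Q_teq: "teq (ract1 C) act x y \<Longrightarrow> Q f x = Q f y"
  unfolding teq_def using Q_null Q_diff by (metis eq_iff_diff_eq_0)

lemma P_lin: "P f (lin G x) = lin (\<lambda>k. P f (G k)) x"
  by (rule lin_hom) (rule P_add)

lemma P_tmap:
  assumes "\<And>x y. p (x + y) = p x + p y" "\<And>w a. p (ract2 C w a) = ract2 C (p w) a"
  shows "P f (tmap p z) = p (P f z)"
proof -
  have "P f (tmap p z) = lin (\<lambda>k. p (case k of (w, g) \<Rightarrow> ract2 C w (h g f))) z"
    unfolding P_def lin_tmap by (rule lin_cong) (auto simp: assms)
  also have "\<dots> = p (P f z)" unfolding P_def by (rule lin_hom[symmetric]) (rule assms)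
  finally show ?thesis .
qed

lemma Q_tmap:
  assumes "\<And>x y. p (x + y) = p x + p y" "\<And>w a. p (ract1 C w a) = ract1 C (p w) a"
  shows "Q f (tmap p z) = p (Q f z)"
proof -
  have "Q f (tmap p z) = lin (\<lambda>k. p (case k of (w, g) \<Rightarrow> ract1 C w (h g f))) z"
    unfolding Q_def lin_tmap by (rule lin_cong) (auto simp: assms)
  also have "\<dots> = p (Q f z)" unfolding Q_def by (rule lin_hom[symmetric]) (rule assms)
  finally show ?thesis .
qed

lemma P_twedge: "P f (twedge C x z) = wedge C x (Q f z)"
proof -
  have "P f (twedge C x z) = lin (\<lambda>k. wedge C x (case k of (y, g) \<Rightarrow> ract1 C y (h g f))) z"
    unfolding P_def twedge_def lin_tmap by (rule lin_cong) (auto simp: wedge_r1r)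
  also have "\<dots> = wedge C x (Q f z)" unfolding Q_def by (rule lin_hom[symmetric]) (rule wedge_addr)
  finally show ?thesis .
qed

lemma Q_tlact: "Q f (tlact C a z) = lact1 C a (Q f z)"
  unfolding tlact_def by (rule Q_tmap) (auto simp: l1_add l1_r1)

lemma P_curv: "P f (curvature C nab e) = lin (\<lambda>(x, g). ract2 C (d1 C x) (h g f) - wedge C x (Q f (nab g))) (nab e)"
  unfolding curvature_def P_lin by (rule lin_cong) (auto simp: P_diff P_twedge)

lemma dual:
  assumes "\<And>f. P f \<omega> = 0"
  shows "\<omega> \<in> tens_null (ract2 C) act"
proof (rule dual_null[OF fg])
  fix \<phi> :: "'e \<Rightarrow> 'a"
  assume "\<forall>e e'. \<phi> (e + e') = \<phi> e + \<phi> e'" "\<forall>a e. \<phi> (act a e) = a * \<phi> e"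
  then obtain f where f: "\<And>e. \<phi> e = h e f" using h_nd by blast
  show "lin (\<lambda>(w, g). ract2 C w (\<phi> g)) \<omega> = 0"
    using assms[of f] unfolding P_def f .
qed

end



lemma hom_neg:
  fixes T :: "'a::ab_group_add \<Rightarrow> 'b::ab_group_add"
  assumes "\<And>a b. T (a + b) = T a + T b"
  shows "T (- a) = - T a"
proof -
  have "T a + T (- a) = 0" using assms[of a "-a"] hom_zero[of T, OF assms] by simp
  then show ?thesis by (metis minus_unique)
qed

lemma hom_diff:
  fixes T :: "'a::ab_group_add \<Rightarrow> 'b::ab_group_add"
  assumes "\<And>a b. T (a + b) = T a + T b"
  shows "T (a - b) = T a - T b"
  using assms[of a "-b"] hom_neg[of T, OF assms, of b] by (simp only: diff_conv_add_uminus)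

context chern begin

lemma hol_keys: "k \<in> Poly_Mapping.keys (dbE e) \<Longrightarrow> p01 C (fst k) = fst k"
  using hol unfolding holomorphic_structure_def by blast
lemma hol_add: "teq (ract1 C) act (dbE (e + f)) (dbE e + dbE f)"
  using hol unfolding holomorphic_structure_def by blast
lemma hol_lin: "teq (ract1 C) act (dbE (act a e)) (tn (dbar0 C a) e + tlact C a (dbE e))"
  using hol unfolding holomorphic_structure_def by blast
lemma hol_sq: "teq (ract2 C) act (lin (\<lambda>(x, f). tn (dbar1 C x) f - twedge C x (dbE f)) (dbE e)) 0"
  using hol unfolding holomorphic_structure_def by blast
lemma nab_p01: "teq (ract1 C) act (tmap (p01 C) (nab e)) (dbE e)"
  using ch unfolding chern_connection_def by blast
lemma metric: "d0 C (h e f) = lin (\<lambda>(x, g). ract1 C x (h g f)) (nab e) + lin (\<lambda>(x, g). lact1 C (h e g) (star1 C x)) (nab f)"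
  using ch unfolding chern_connection_def preserves_metric_def by blast

lemma p01_0[simp]: "p01 C 0 = 0" by (rule hom_zero) (rule p01_add)
lemma p10_0[simp]: "p10 C 0 = 0" by (rule hom_zero) (rule p10_add)
lemma p11_0[simp]: "p11 C 0 = 0" by (rule hom_zero) (rule p11_add)
lemma p02_0[simp]: "p02 C 0 = 0" by (rule hom_zero) (rule p02_add)
lemma d1_0[simp]: "d1 C 0 = 0" by (rule hom_zero) (rule d1_add)
lemma p02_diff: "p02 C (x - y) = p02 C x - p02 C y" by (rule hom_diff) (rule p02_add)
lemma r2_diff: "ract2 C (x - y) a = ract2 C x a - ract2 C y a" by (rule hom_diff) (rule r2_add)

lemma p02_wedge: "p02 C (wedge C x y) = wedge C (p01 C x) (p01 C y)"
proof -
  have "p02 C (wedge C x y) = p02 C (wedge C (p10 C x + p01 C x) (p10 C y + p01 C y))"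
    by (simp add: p_split)
  also have "\<dots> = p02 C (p20 C (wedge C (p10 C x) (p10 C y))) + p02 C (p11 C (wedge C (p10 C x) (p01 C y)))
      + p02 C (p11 C (wedge C (p01 C x) (p10 C y))) + p02 C (wedge C (p01 C x) (p01 C y))"
    by (simp add: wedge_addl wedge_addr p02_add w20 w11a w11b add.assoc)
  also have "\<dots> = wedge C (p01 C x) (p01 C y)"
    by (simp add: p02_p20 p02_p11 w02)
  finally show ?thesis .
qed

lemma p02_d1: "p02 C (d1 C x) = p02 C (d1 C (p01 C x))"
proof -
  have "p02 C (d1 C x) = p02 C (d1 C (p10 C x + p01 C x))" by (simp add: p_split)
  then show ?thesis by (simp add: d1_add p02_add p02_d1_p10)
qed

lemma dbar1_01: "p01 C x = x \<Longrightarrow> dbar1 C x = p02 C (d1 C x)"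
  unfolding dbar1_def by (metis p10_p01 d1_0 p11_0 add_0)

lemma Q_dbE_add: "Q f (dbE (g + g')) = Q f (dbE g) + Q f (dbE g')"
  using Q_teq[OF hol_add] Q_add by simp

lemma Q_dbE_lin: "Q f (dbE (act a g)) = ract1 C (dbar0 C a) (h g f) + lact1 C a (Q f (dbE g))"
  using Q_teq[OF hol_lin] by (simp add: Q_add Q_tlact)

lemma Q_p01: "p01 C (Q f z) = Q f (tmap (p01 C) z)"
  by (rule Q_tmap[symmetric]) (auto simp: p01_add p01_r1)

definition F :: "'e \<Rightarrow> 'w1 \<Rightarrow> 'e \<Rightarrow> 'w2" where
  "F f x g = ract2 C (p02 C (d1 C x)) (h g f) - wedge C x (Q f (dbE g))"

lemma G_bal: "F f (p01 C (ract1 C x a)) g = F f (p01 C x) (act a g)"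
proof -
  let ?u = "p01 C x"
  have eq: "p02 C (d1 C (ract1 C ?u a)) = ract2 C (p02 C (d1 C ?u)) a - wedge C ?u (dbar0 C a)"
    by (simp add: d1_r1 p02_diff p02_r2 p02_wedge p01_p01 dbar0_def)
  then show ?thesis
    unfolding F_def p01_r1 eq
    by (simp add: r2_diff r2_mult h_lin Q_dbE_lin wedge_addr wedge_r1l wedge_r1r algebra_simps)
qed

lemma G_addl: "F f (p01 C (x + x')) g = F f (p01 C x) g + F f (p01 C x') g"
  unfolding F_def by (simp add: p01_add d1_add p02_add r2_add wedge_addl algebra_simps)

lemma G_addr: "F f (p01 C x) (g + g') = F f (p01 C x) g + F f (p01 C x) g'"
  unfolding F_def by (simp add: h_addl r2_addr Q_dbE_add wedge_addr algebra_simps)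

lemma P02: "p02 C (P f (curvature C nab e)) = 0"
proof -
  have A: "p02 C (P f (curvature C nab e)) = lin (\<lambda>(x, g). F f (p01 C x) g) (nab e)"
  proof -
    have "p02 C (P f (curvature C nab e)) = lin (\<lambda>k. p02 C (case k of (x, g) \<Rightarrow> ract2 C (d1 C x) (h g f) - wedge C x (Q f (nab g)))) (nab e)"
      unfolding P_curv by (rule lin_hom) (rule p02_add)
    also have "\<dots> = lin (\<lambda>(x, g). F f (p01 C x) g) (nab e)"
    proof (rule lin_cong)
      fix k assume "k \<in> Poly_Mapping.keys (nab e)"
      obtain x g where k: "k = (x, g)" by fastforce
      have "p01 C (Q f (nab g)) = Q f (dbE g)" unfolding Q_p01 by (rule Q_teq[OF nab_p01])
      then show "p02 C (case k of (x, g) \<Rightarrow> ract2 C (d1 C x) (h g f) - wedge C x (Q f (nab g))) = (case k of (x, g) \<Rightarrow> F f (p01 C x) g)"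
        unfolding k F_def by (simp add: p02_diff p02_r2 p02_wedge p01_p01 flip: p02_d1)
    qed
    finally show ?thesis .
  qed
  have B: "lin (\<lambda>(x, g). F f (p01 C x) g) (nab e) = lin (\<lambda>(x, g). F f (p01 C x) g) (tmap (p01 C) (nab e))"
    unfolding lin_tmap by (rule lin_cong) (auto simp: p01_p01)
  have Cc: "lin (\<lambda>(x, g). F f (p01 C x) g) (tmap (p01 C) (nab e)) = lin (\<lambda>(x, g). F f (p01 C x) g) (dbE e)"
    by (rule lin_teq[OF _ _ _ nab_p01]) (auto simp: G_addl G_addr G_bal)
  have D: "lin (\<lambda>(x, g). F f (p01 C x) g) (dbE e) = P f (lin (\<lambda>(x, f). tn (dbar1 C x) f - twedge C x (dbE f)) (dbE e))"
    unfolding P_lin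
  proof (rule lin_cong)
    fix k assume kk: "k \<in> Poly_Mapping.keys (dbE e)"
    obtain x g where k: "k = (x, g)" by fastforce
    have x: "p01 C x = x" using hol_keys[OF kk] k by simp
    show "(case k of (x, g) \<Rightarrow> F f (p01 C x) g) = P f (case k of (x, f) \<Rightarrow> tn (dbar1 C x) f - twedge C x (dbE f))"
      unfolding k using x by (simp add: F_def P_diff P_twedge dbar1_01)
  qed
  have E: "P f (lin (\<lambda>(x, f). tn (dbar1 C x) f - twedge C x (dbE f)) (dbE e)) = 0"
    using P_teq[OF hol_sq] by (simp add: P_def)
  show ?thesis using A B Cc D E by simp
qed

end



context chern begin

definition N :: "'e \<Rightarrow> 'e \<Rightarrow> 'w1" where
  "N f g = lin (\<lambda>(y, k). lact1 C (h g k) (star1 C y)) (nab f)"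
definition Tm :: "'e \<Rightarrow> 'e \<Rightarrow> 'w2" where
  "Tm e f = lin (\<lambda>(x, g). wedge C x (N f g)) (nab e)"

lemma metric': "Q f (nab g) = d0 C (h g f) - N f g"
  using metric[of g f] unfolding Q_def N_def by simp

lemma wedge_diffr: "wedge C x (y - z) = wedge C x y - wedge C x z" by (rule hom_diff) (rule wedge_addr)
lemma d1_diff: "d1 C (x - y) = d1 C x - d1 C y" by (rule hom_diff) (rule d1_add)
lemma s2_neg: "star2 C (- x) = - star2 C x" by (rule hom_neg) (rule s2_add)
lemma s2_diff: "star2 C (x - y) = star2 C x - star2 C y" by (rule hom_diff) (rule s2_add)
lemma p20_neg: "p20 C (- x) = - p20 C x" by (rule hom_neg) (rule p20_add)

lemma P_curv2: "P f (curvature C nab e) = - d1 C (N f e) + Tm e f"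
proof -
  have "P f (curvature C nab e) = lin (\<lambda>k. (case k of (x, g) \<Rightarrow> d1 C (ract1 C x (h g f))) + (case k of (x, g) \<Rightarrow> wedge C x (N f g))) (nab e)"
    unfolding P_curv by (rule lin_cong) (auto simp: metric' wedge_diffr d1_r1)
  also have "\<dots> = lin (\<lambda>k. d1 C (case k of (x, g) \<Rightarrow> ract1 C x (h g f))) (nab e) + Tm e f"
    unfolding lin_fadd Tm_def by (simp add: case_prod_unfold)
  also have "lin (\<lambda>k. d1 C (case k of (x, g) \<Rightarrow> ract1 C x (h g f))) (nab e) = d1 C (Q f (nab e))"
    unfolding Q_def by (rule lin_hom[symmetric]) (rule d1_add)
  also have "\<dots> = - d1 C (N f e)" by (simp add: metric' d1_diff d1_d0)
  finally show ?thesis .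
qed

lemma N_star: "N f g = star1 C (Q g (nab f))"
proof -
  have "star1 C (Q g (nab f)) = lin (\<lambda>k. star1 C (case k of (y, k) \<Rightarrow> ract1 C y (h k g))) (nab f)"
    unfolding Q_def by (rule lin_hom) (rule s1_add)
  also have "\<dots> = N f g" unfolding N_def by (rule lin_cong) (auto simp: s1_r1 h_sym)
  finally show ?thesis by simp
qed

lemma d1N: "d1 C (N f e) = - star2 C (d1 C (N e f))"
  unfolding N_star[of f e] d1_s1 metric' by (simp add: d1_diff d1_d0 s2_neg)

definition W :: "'w1 \<times> 'e \<Rightarrow> 'w1 \<times> 'e \<Rightarrow> 'w2" where
  "W a b = wedge C (fst a) (lact1 C (h (snd a) (snd b)) (star1 C (fst b)))"

lemma Tm_W: "Tm e f = lin (\<lambda>a. lin (\<lambda>b. W a b) (nab f)) (nab e)"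
  unfolding Tm_def
proof (rule lin_cong)
  fix k :: "'w1 \<times> 'e"
  obtain x g where k: "k = (x, g)" by fastforce
  have "wedge C x (N f g) = lin (\<lambda>b. wedge C x (case b of (y, kk) \<Rightarrow> lact1 C (h g kk) (star1 C y))) (nab f)"
    unfolding N_def by (rule lin_hom) (rule wedge_addr)
  also have "\<dots> = lin (\<lambda>b. W k b) (nab f)" by (rule lin_cong) (auto simp: W_def k)
  finally show "(case k of (x, g) \<Rightarrow> wedge C x (N f g)) = lin (\<lambda>b. W k b) (nab f)" by (simp add: k)
qed

lemma Tm_swap: "star2 C (Tm f e) = - Tm e f"
proof -
  have "star2 C (Tm f e) = lin (\<lambda>b. star2 C (lin (\<lambda>a. W b a) (nab e))) (nab f)"
    unfolding Tm_W by (rule lin_hom) (rule s2_add)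
  also have "\<dots> = lin (\<lambda>b. lin (\<lambda>a. - W a b) (nab e)) (nab f)"
  proof (rule lin_cong)
    fix b
    have "star2 C (lin (\<lambda>a. W b a) (nab e)) = lin (\<lambda>a. star2 C (W b a)) (nab e)"
      by (rule lin_hom) (rule s2_add)
    also have "\<dots> = lin (\<lambda>a. - W a b) (nab e)"
      by (rule lin_cong) (simp add: W_def s2_wedge s1_l1 s1_s1 h_sym wedge_r1l)
    finally show "star2 C (lin (\<lambda>a. W b a) (nab e)) = lin (\<lambda>a. - W a b) (nab e)" .
  qed
  also have "\<dots> = - lin (\<lambda>b. lin (\<lambda>a. W a b) (nab e)) (nab f)"
    by (simp add: lin_fneg)
  also have "\<dots> = - Tm e f"
    unfolding Tm_W by (simp add: lin_swap[of "\<lambda>b a. W a b"])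
  finally show ?thesis .
qed

lemma P_swap: "P f (curvature C nab e) = - star2 C (P e (curvature C nab f))"
  unfolding P_curv2 by (simp add: s2_add s2_neg s2_diff Tm_swap d1N[of f e])

lemma P20: "p20 C (P f (curvature C nab e)) = 0"
proof -
  have "p20 C (P f (curvature C nab e)) = p20 C (- star2 C (P e (curvature C nab f)))"
    by (rule arg_cong[OF P_swap])
  also have "\<dots> = - star2 C (p02 C (P e (curvature C nab f)))"
    by (simp add: p20_neg s2_p02)
  also have "\<dots> = 0" by (simp add: P02 hom_zero[OF s2_add])
  finally show ?thesis .
qed

lemma final: "teq (ract2 C) act (tmap (p02 C) (curvature C nab e)) 0 \<and>
             teq (ract2 C) act (tmap (p20 C) (curvature C nab e)) 0"
proof -
  have "tmap (p02 C) (curvature C nab e) \<in> tens_null (ract2 C) act"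
    by (rule dual) (simp add: P_tmap[OF p02_add p02_r2] P02)
  moreover have "tmap (p20 C) (curvature C nab e) \<in> tens_null (ract2 C) act"
    by (rule dual) (simp add: P_tmap[OF p20_add p20_r2] P20)
  ultimately show ?thesis unfolding teq_def by simp
qed

end

theorem mainTheorem13:
  fixes C :: "('a::ring_1, 'w1::ab_group_add, 'w2::ab_group_add) calc"
    and act :: "'a \<Rightarrow> 'e::ab_group_add \<Rightarrow> 'e"
    and h :: "'e \<Rightarrow> 'e \<Rightarrow> 'a"
    and dbE nab :: "'e \<Rightarrow> ('w1 \<times> 'e \<Rightarrow>\<^sub>0 int)"
  assumes "ac_star_calculus C"
    and "left_module act"
    and "fg_projective act"
    and "holomorphic_structure C act dbE"
    and "nondeg_hermitian C act h"
    and "chern_connection C act h dbE nab"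
  shows "\<forall>e. teq (ract2 C) act (tmap (p02 C) (curvature C nab e)) 0 \<and>
             teq (ract2 C) act (tmap (p20 C) (curvature C nab e)) 0"
proof -
  interpret chern C act h dbE nab using assms by unfold_locales
  show ?thesis using final by blast
qed


end
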